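(* Let $\mu$ be a distribution over $X\times\mathbb{R}$, let $f_1:X\to\mathbb{R}$ and $b:X\to[-1,1]\cup\{*\}$. Assume \[ \mathbb{E}_{(x,y)\sim\mu}[(y-f_1(x))\diamondsuit b(x)]\le\alpha\quad\text{and}\quad\mathbb{E}_{(x,y)\sim\mu}[(f_1(x)-y)\,\mathrm{sign}(f_1(x))]\le\varepsilon. \] Then $\mathbb{E}_{(x,y)\sim\mu}[y\,\mathrm{sign}(f_1(x))]\ge\mathbb{E}_{(x,y)\sim\mu}[y\diamondsuit b(x)]-\alpha-\varepsilon$.
   Context: Distributions are discrete (countable support). For $u_1\in\mathbb{R}$, $u_2\in[-1,1]\cup\{*\}$, the generalized product is $u_1\diamondsuit u_2=u_1u_2$ if $u_2\in[-1,1]$ and $-|u_1|$ if $u_2=*$. $\mathrm{sign}(u)=1$ if $u\ge0$ and $-1$ if $u<0$. *)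

theory Defs
  imports "HOL-Probability.Probability"
begin

text \<open>Generalized product: the value None plays the role of the symbol star.\<close>
definition gprod :: "real \<Rightarrow> real option \<Rightarrow> real" where
  "gprod u1 u2 = (case u2 of Some v \<Rightarrow> u1 * v | None \<Rightarrow> - \<bar>u1\<bar>)"

text \<open>sign(u) = 1 if u >= 0, -1 otherwise (note: differs from sgn at 0).\<close>
definition sign :: "real \<Rightarrow> real" where
  "sign u = (if u \<ge> 0 then 1 else -1)"

end

theory Submission
  imports Defs
begin

theorem lemma6p3:
  fixes \<mu> :: "('x \<times> real) pmf"
    and f1 :: "'x \<Rightarrow> real"
    and b :: "'x \<Rightarrow> real option"
    and \<alpha> \<epsilon> :: real
  assumes b_range: "\<And>x r. b x = Some r \<Longrightarrow> -1 \<le> r \<and> r \<le> 1"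
    and int1: "integrable (measure_pmf \<mu>) (\<lambda>(x, y). gprod (y - f1 x) (b x))"
    and int2: "integrable (measure_pmf \<mu>) (\<lambda>(x, y). (f1 x - y) * sign (f1 x))"
    and int3: "integrable (measure_pmf \<mu>) (\<lambda>(x, y). y * sign (f1 x))"
    and int4: "integrable (measure_pmf \<mu>) (\<lambda>(x, y). gprod y (b x))"
    and h1: "measure_pmf.expectation \<mu> (\<lambda>(x, y). gprod (y - f1 x) (b x)) \<le> \<alpha>"
    and h2: "measure_pmf.expectation \<mu> (\<lambda>(x, y). (f1 x - y) * sign (f1 x)) \<le> \<epsilon>"
  shows "measure_pmf.expectation \<mu> (\<lambda>(x, y). y * sign (f1 x))
           \<ge> measure_pmf.expectation \<mu> (\<lambda>(x, y). gprod y (b x)) - \<alpha> - \<epsilon>"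
proof -
  let ?A = "\<lambda>(x, y). gprod (y - f1 x) (b x)"
  let ?B = "\<lambda>(x, y). (f1 x - y) * sign (f1 x)"
  let ?C = "\<lambda>(x, y). y * sign (f1 x)"
  let ?D = "\<lambda>(x, y). gprod y (b x)"
  have pw: "?D z \<le> ?A z + ?B z + ?C z" for z
  proof (cases z)
    case (Pair x y)
    have af: "\<bar>f1 x\<bar> = f1 x * sign (f1 x)" by (simp add: sign_def)
    have "gprod y (b x) \<le> gprod (y - f1 x) (b x) + \<bar>f1 x\<bar>"
    proof (cases "b x")
      case None then show ?thesis by (simp add: gprod_def)
    next
      case (Some v)
      with b_range have v: "-1 \<le> v" "v \<le> 1" by auto
      have "f1 x * v \<le> \<bar>f1 x\<bar>"
      proof -
        have "\<bar>f1 x * v\<bar> \<le> \<bar>f1 x\<bar>" using v by (simp add: abs_mult mult_left_le)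
        then show ?thesis by linarith
      qed
      then show ?thesis using Some by (simp add: gprod_def algebra_simps)
    qed
    then show ?thesis using Pair af by (simp add: algebra_simps)
  qed
  have "measure_pmf.expectation \<mu> ?D \<le> measure_pmf.expectation \<mu> (\<lambda>z. ?A z + ?B z + ?C z)"
    by (rule integral_mono[OF int4 _ pw]) (intro Bochner_Integration.integrable_add int1 int2 int3)
  also have "\<dots> = measure_pmf.expectation \<mu> ?A + measure_pmf.expectation \<mu> ?B + measure_pmf.expectation \<mu> ?C"
    by (simp add: Bochner_Integration.integral_add Bochner_Integration.integrable_add int1 int2 int3)
  finally show ?thesis using h1 h2 by linarith
qed

end
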